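(* Let $r\ge3$. For any partition $\mathcal{Q}$ of $[r]=\{1,\dots,r\}$ with $|\mathcal{Q}|\ge2$, there exists a bijection $\tau:\mathfrak{P}_{[r]}\to\mathfrak{P}_{[r]}$ such that $|\tau(\mathcal{P})|\equiv|\mathcal{P}|+1\pmod 2$ for every $\mathcal{P}\in\mathfrak{P}_{[r]}$, and $\widetilde\psi^{\mathcal{Q}}\circ\tau=\widetilde\psi^{\mathcal{Q}}$ for every $\psi:2^{[r]}\to\mathbb{R}$ with $\psi(\emptyset)=1$.
   Context: $\mathfrak{P}_{[r]}$ is the set of cyclically ordered partitions of $[r]$ (partitions into non-empty blocks with a cyclic order on the blocks; two such are equal if they have the same blocks and the same cyclic order), $|\mathcal{P}|$ the number of blocks. For a partition $\mathcal{Q}$ of $[r]$, $\psi^{\mathcal{Q}}(I)=\prod_{J\in\mathcal{Q}}\psi(I\cap J)$ and $\widetilde\psi^{\mathcal{Q}}(\mathcal{P})=\prod_{I\in\mathcal{P}}\psi^{\mathcal{Q}}(I)$. *)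

theory Defs
  imports Complex_Main "HOL-Library.Disjoint_Sets" "HOL-Combinatorics.Permutations"
begin

text \<open>A cyclically ordered partition of [r] = {1..r} is represented as a pair (P, s) where
  P is a set partition of {1..r} into non-empty blocks and s is a cyclic permutation of the
  blocks (s B is the successor of block B in the cyclic order; s is the identity outside P).\<close>

definition cyc_ord_partitions :: "nat \<Rightarrow> (nat set set \<times> (nat set \<Rightarrow> nat set)) set" where
  "cyc_ord_partitions r =
     {(P, s). partition_on {1..r} P \<and> s permutes P \<and>
              (\<forall>B\<in>P. \<forall>C\<in>P. \<exists>n. (s ^^ n) B = C)}"

definition nblocks :: "nat set set \<times> (nat set \<Rightarrow> nat set) \<Rightarrow> nat" where
  "nblocks P = card (fst P)"

definition psiQ :: "(nat set \<Rightarrow> real) \<Rightarrow> nat set set \<Rightarrow> nat set \<Rightarrow> real" where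
  "psiQ \<psi> Q I = (\<Prod>J\<in>Q. \<psi> (I \<inter> J))"

definition psiQ_tilde :: "(nat set \<Rightarrow> real) \<Rightarrow> nat set set \<Rightarrow> nat set set \<times> (nat set \<Rightarrow> nat set) \<Rightarrow> real" where
  "psiQ_tilde \<psi> Q P = (\<Prod>I\<in>fst P. psiQ \<psi> Q I)"

end

theory Submission
  imports Defs
begin

fun okl :: "nat set list \<Rightarrow> nat set \<Rightarrow> bool" where
  "okl [] A = (A = {})"
| "okl (B # bs) A = (B \<noteq> {} \<and> B \<subseteq> A \<and> okl bs (A - B))"

definition Mx :: "nat set \<Rightarrow> nat set \<Rightarrow> bool" where
  "Mx J B = (B \<inter> J \<noteq> {} \<and> \<not> B \<subseteq> J)"
definition Mg :: "nat set \<Rightarrow> nat set \<Rightarrow> nat set \<Rightarrow> bool" where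
  "Mg J B C = (B \<subseteq> J \<and> C \<inter> J = {})"

fun gI :: "nat set \<Rightarrow> nat set list \<Rightarrow> nat set list" where
  "gI J [] = []"
| "gI J [B] = (if Mx J B then [B \<inter> J, B - J] else [B])"
| "gI J (B # C # rest) = (if Mx J B then (B \<inter> J) # (B - J) # C # rest
     else if Mg J B C then (B \<union> C) # rest else B # gI J (C # rest))"

lemma g2a: "Mx J B \<Longrightarrow> gI J [B] = [B \<inter> J, B - J]" by simp
lemma g2b: "\<not> Mx J B \<Longrightarrow> gI J [B] = [B]" by simp
lemma g3a: "Mx J B \<Longrightarrow> gI J (B # C # rest) = (B \<inter> J) # (B - J) # C # rest"
  by simp
lemma g3b: "\<not> Mx J B \<Longrightarrow> Mg J B C \<Longrightarrow> gI J (B # C # rest) = (B \<union> C) # rest"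
  by simp
lemma g3c: "\<not> Mx J B \<Longrightarrow> \<not> Mg J B C \<Longrightarrow> gI J (B # C # rest) = B # gI J (C # rest)"
  by simp
declare gI.simps(2,3)[simp del]

lemma okl_g: "okl xs A \<Longrightarrow> okl (gI J xs) A"
proof (induction J xs arbitrary: A rule: gI.induct)
  case (2 J B)
  then show ?case
    by (cases "Mx J B") (auto simp: g2a g2b Mx_def)
next
  case (3 J B C rest)
  show ?case
  proof (cases "Mx J B")
    case True
    have e: "A - B \<inter> J - (B - J) = A - B" by blast
    show ?thesis using True "3.prems" unfolding g3a[OF True] by (simp only: okl.simps e Mx_def) blast
  next
    case F1: False
    show ?thesis
    proof (cases "Mg J B C")
      case True
      have e: "A - (B \<union> C) = A - B - C" by blast
      show ?thesis using True "3.prems" unfolding g3b[OF F1 True] by (simp only: okl.simps e) blast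
    next
      case False
      have ok2: "okl (C # rest) (A - B)" using "3.prems" by auto
      show ?thesis using "3.IH"[OF F1 False ok2] "3.prems" unfolding g3c[OF F1 False] by simp
    qed
  qed
qed auto

lemma g_nonempty: "(gI J xs = []) = (xs = [])"
proof (induction J xs rule: gI.induct)
  case (2 J B)
  then show ?case by (cases "Mx J B") (simp_all add: g2a g2b)
next
  case (3 J B C rest)
  then show ?case by (cases "Mx J B"; cases "Mg J B C") (simp_all add: g3a g3b g3c)
qed simp

lemma hdC: "okl xs A \<Longrightarrow> xs \<noteq> [] \<Longrightarrow> (hd (gI J xs) \<inter> J = {}) = (hd xs \<inter> J = {})"
proof (induction J xs arbitrary: A rule: gI.induct)
  case (2 J B)
  then show ?case by (cases "Mx J B") (auto simp: g2a g2b Mx_def)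
next
  case (3 J B C rest)
  have "B \<noteq> {}" "C \<noteq> {}" using "3.prems" by auto
  show ?case
  proof (cases "Mx J B")
    case True then show ?thesis by (simp add: g3a Mx_def)
  next
    case F1: False
    show ?thesis
    proof (cases "Mg J B C")
      case True then show ?thesis using g3b[OF F1 True] \<open>B \<noteq> {}\<close> by (auto simp: Mg_def)
    next
      case False then show ?thesis using g3c[OF F1 False] by simp
    qed
  qed
qed auto

lemma invol: "okl xs A \<Longrightarrow> gI J (gI J xs) = xs"
proof (induction J xs arbitrary: A rule: gI.induct)
  case (2 J B)
  show ?case
  proof (cases "Mx J B")
    case True
    have a: "\<not> Mx J (B \<inter> J)" "Mg J (B \<inter> J) (B - J)" by (auto simp: Mx_def Mg_def)
    have c: "B \<inter> J \<union> (B - J) = B" by blast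
    show ?thesis unfolding g2a[OF True] g3b[OF a] c by simp
  next
    case False then show ?thesis by (simp add: g2b)
  qed
next
  case (3 J B C rest)
  show ?case
  proof (cases "Mx J B")
    case True
    have a: "\<not> Mx J (B \<inter> J)" "Mg J (B \<inter> J) (B - J)" by (auto simp: Mx_def Mg_def)
    have c: "B \<inter> J \<union> (B - J) = B" by blast
    show ?thesis unfolding g3a[OF True] g3b[OF a] c ..
  next
    case F1: False
    show ?thesis
    proof (cases "Mg J B C")
      case True
      have "B \<noteq> {}" "C \<noteq> {}" using "3.prems" by auto
      then have e: "(B \<union> C) \<inter> J = B" "(B \<union> C) - J = C" using True by (auto simp: Mg_def)
      have m: "Mx J (B \<union> C)" using True \<open>B \<noteq> {}\<close> \<open>C \<noteq> {}\<close> by (auto simp: Mx_def Mg_def)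
      show ?thesis
      proof (cases rest)
        case Nil
        then show ?thesis using g3b[OF F1 True] g2a[OF m] e by simp
      next
        case (Cons D r)
        then show ?thesis using g3b[OF F1 True] g3a[OF m] e by simp
      qed
    next
      case False
      have ok2: "okl (C # rest) (A - B)" using "3.prems" by auto
      obtain C' r' where cr: "gI J (C # rest) = C' # r'"
        by (metis g_nonempty list.exhaust list.distinct(1))
      have "(C' \<inter> J = {}) = (C \<inter> J = {})" using hdC[OF ok2, of J] cr by auto
      then have F2: "\<not> Mg J B C'" using False by (auto simp: Mg_def)
      show ?thesis using g3c[OF F1 False] g3c[OF F1 F2] cr "3.IH"[OF F1 False ok2] by simp
    qed
  qed
qed auto

lemma len_g: "okl xs A \<Longrightarrow> xs \<noteq> [] \<Longrightarrow> hd xs \<inter> J \<noteq> {} \<Longrightarrow> \<not> A \<subseteq> J \<Longrightarrow>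
   length (gI J xs) = Suc (length xs) \<or> Suc (length (gI J xs)) = length xs"
proof (induction J xs arbitrary: A rule: gI.induct)
  case (2 J B)
  then have "Mx J B" by (auto simp: Mx_def)
  then show ?case by (simp add: g2a)
next
  case (3 J B C rest)
  show ?case
  proof (cases "Mx J B")
    case True
    then show ?thesis by (simp add: g3a)
  next
    case F1: False
    show ?thesis
    proof (cases "Mg J B C")
      case True
      then show ?thesis using g3b[OF F1 True] by simp
    next
      case False
      have ok2: "okl (C # rest) (A - B)" using "3.prems" by auto
      have "B \<subseteq> J" using F1 "3.prems" by (auto simp: Mx_def)
      then have "C \<inter> J \<noteq> {}" "\<not> (A - B) \<subseteq> J" using False "3.prems" by (auto simp: Mg_def)
      then have "length (gI J (C # rest)) = Suc (length (C # rest)) \<or> Suc (length (gI J (C # rest))) = length (C # rest)"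
        using "3.IH"[OF F1 False ok2] by simp
      then show ?thesis unfolding g3c[OF F1 False] by simp
    qed
  qed
qed auto

lemma prod_g:
  fixes F :: "nat set \<Rightarrow> real"
  shows "(\<And>X. F X = F (X \<inter> J) * F (X - J)) \<Longrightarrow> okl xs A \<Longrightarrow> prod_list (map F (gI J xs)) = prod_list (map F xs)"
proof (induction J xs arbitrary: A rule: gI.induct)
  case (2 J B)
  show ?case using "2.prems"(1)[of B] by (cases "Mx J B") (simp_all add: g2a g2b)
next
  case (3 J B C rest)
  show ?case
  proof (cases "Mx J B")
    case True
    then show ?thesis using "3.prems"(1)[of B] by (simp add: g3a)
  next
    case F1: False
    show ?thesis
    proof (cases "Mg J B C")
      case True
      then have "(B \<union> C) \<inter> J = B" "(B \<union> C) - J = C" by (auto simp: Mg_def)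
      then show ?thesis using g3b[OF F1 True] "3.prems"(1)[of "B \<union> C"] by simp
    next
      case False
      have ok2: "okl (C # rest) (A - B)" using "3.prems" by auto
      then show ?thesis using g3c[OF F1 False] "3.IH"[OF F1 False "3.prems"(1) ok2] by simp
    qed
  qed
qed auto

lemma hd_g: "okl xs A \<Longrightarrow> xs \<noteq> [] \<Longrightarrow> x \<in> hd xs \<Longrightarrow> x \<in> J \<Longrightarrow> x \<in> hd (gI J xs)"
proof (induction J xs arbitrary: A rule: gI.induct)
  case (2 J B)
  then show ?case by (cases "Mx J B") (simp_all add: g2a g2b)
next
  case (3 J B C rest)
  have "x \<in> B" using "3.prems" by simp
  show ?case
  proof (cases "Mx J B")
    case True then show ?thesis using \<open>x \<in> B\<close> "3.prems" unfolding g3a[OF True] by simp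
  next
    case F1: False
    show ?thesis
    proof (cases "Mg J B C")
      case True then show ?thesis using \<open>x \<in> B\<close> unfolding g3b[OF F1 True] by simp
    next
      case False then show ?thesis using \<open>x \<in> B\<close> unfolding g3c[OF F1 False] by simp
    qed
  qed
qed simp



definition nxt :: "nat set list \<Rightarrow> nat set \<Rightarrow> nat set" where
  "nxt xs B = (case map_of (zip xs (rotate1 xs)) B of None \<Rightarrow> B | Some C \<Rightarrow> C)"

definition fL :: "nat set list \<Rightarrow> nat set set \<times> (nat set \<Rightarrow> nat set)" where
  "fL xs = (set xs, nxt xs)"

definition Lr :: "nat \<Rightarrow> nat set list set" where
  "Lr r = {xs. okl xs {1..r} \<and> xs \<noteq> [] \<and> 1 \<in> hd xs}"

lemma okl_props: "okl xs A \<Longrightarrow> distinct xs \<and> \<Union>(set xs) = A \<and> {} \<notin> set xs \<and>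
   (\<forall>B\<in>set xs. \<forall>C\<in>set xs. B \<noteq> C \<longrightarrow> B \<inter> C = {})"
proof (induction xs arbitrary: A)
  case Nil then show ?case by simp
next
  case (Cons B bs)
  then have IH: "distinct bs \<and> \<Union>(set bs) = A - B \<and> {} \<notin> set bs \<and>
   (\<forall>B\<in>set bs. \<forall>C\<in>set bs. B \<noteq> C \<longrightarrow> B \<inter> C = {})" and h: "B \<noteq> {}" "B \<subseteq> A" by auto
  have "B \<notin> set bs" using IH h by blast
  moreover have "\<forall>C\<in>set bs. B \<inter> C = {}" using IH by blast
  ultimately show ?case using IH h by auto
qed

lemma okl_partition: "okl xs A \<Longrightarrow> partition_on A (set xs)"
  using okl_props[of xs A] unfolding partition_on_def disjoint_def disjnt_def pairwise_def by auto

lemma okl_of: "distinct xs \<Longrightarrow> partition_on A (set xs) \<Longrightarrow> okl xs A"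
proof (induction xs arbitrary: A)
  case Nil then show ?case by (simp add: partition_on_def)
next
  case (Cons B bs)
  have d: "\<forall>C\<in>set bs. B \<inter> C = {}" using Cons.prems
    unfolding partition_on_def disjoint_def disjnt_def pairwise_def by auto
  have "partition_on (A - B) (set bs)" using Cons.prems d
    unfolding partition_on_def disjoint_def disjnt_def pairwise_def by auto
  then have "okl bs (A - B)" using Cons by simp
  moreover have "B \<noteq> {}" "B \<subseteq> A" using Cons.prems unfolding partition_on_def by auto
  ultimately show ?case by simp
qed

lemma nxt_nth: "distinct xs \<Longrightarrow> i < length xs \<Longrightarrow> nxt xs (xs ! i) = xs ! (Suc i mod length xs)"
  unfolding nxt_def by (simp add: map_of_zip_nth nth_rotate1)

lemma nxt_out: "B \<notin> set xs \<Longrightarrow> nxt xs B = B"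
proof -
  assume a: "B \<notin> set xs"
  have m: "map_of (zip xs (rotate1 xs)) B = None"
    using a by (auto simp add: map_of_eq_None_iff dest: set_zip_leftD)
  show "nxt xs B = B" unfolding nxt_def m by simp
qed

lemma nxt_pow: "distinct xs \<Longrightarrow> i < length xs \<Longrightarrow> (nxt xs ^^ m) (xs ! i) = xs ! ((i + m) mod length xs)"
proof (induction m)
  case 0 then show ?case by simp
next
  case (Suc m)
  have "(nxt xs ^^ Suc m) (xs ! i) = nxt xs (xs ! ((i + m) mod length xs))" using Suc by simp
  also have "\<dots> = xs ! (Suc ((i + m) mod length xs) mod length xs)"
    using Suc.prems by (intro nxt_nth) (auto intro: mod_less_divisor)
  also have "\<dots> = xs ! ((i + Suc m) mod length xs)" by (simp add: mod_Suc_eq)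
  finally show ?case .
qed

lemma fL_in: assumes "xs \<in> Lr r" shows "fL xs \<in> cyc_ord_partitions r"
proof -
  have ok: "okl xs {1..r}" and ne: "xs \<noteq> []" using assms by (auto simp: Lr_def)
  have d: "distinct xs" using okl_props[OF ok] by simp
  define n where "n = length xs"
  have n0: "n > 0" using ne n_def by simp
  have surj: "set xs \<subseteq> nxt xs ` set xs"
  proof
    fix C assume "C \<in> set xs"
    then obtain j where j: "j < n" "C = xs ! j" by (auto simp: in_set_conv_nth n_def)
    let ?i = "(j + n - 1) mod n"
    have "?i < n" using n0 by simp
    have "nxt xs (xs ! ?i) = xs ! (Suc ?i mod n)" using d \<open>?i < n\<close> nxt_nth n_def by simp
    also have "Suc ?i mod n = Suc (j + n - 1) mod n" by (simp add: mod_Suc_eq)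
    also have "Suc (j + n - 1) = j + n" using n0 by simp
    also have "(j + n) mod n = j" using j by simp
    finally show "C \<in> nxt xs ` set xs" using j \<open>?i < n\<close> n_def by (metis image_eqI nth_mem)
  qed
  have img: "nxt xs ` set xs \<subseteq> set xs"
  proof
    fix C assume "C \<in> nxt xs ` set xs"
    then obtain i where "i < n" "C = nxt xs (xs ! i)" by (auto simp: in_set_conv_nth n_def)
    then show "C \<in> set xs" using d nxt_nth n0 n_def by simp
  qed
  have inj: "inj_on (nxt xs) (set xs)" by (rule finite_surj_inj[OF _ surj]) simp
  have bij: "bij_betw (nxt xs) (set xs) (set xs)"
    unfolding bij_betw_def using inj img surj by blast
  have perm: "nxt xs permutes set xs"
    by (rule bij_imp_permutes[OF bij]) (simp add: nxt_out)
  have trans: "\<forall>B\<in>set xs. \<forall>C\<in>set xs. \<exists>m. (nxt xs ^^ m) B = C"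
  proof (intro ballI)
    fix B C assume "B \<in> set xs" "C \<in> set xs"
    then obtain i j where ij: "i < n" "B = xs ! i" "j < n" "C = xs ! j" by (auto simp: in_set_conv_nth n_def)
    have "(nxt xs ^^ (j + n - i)) B = xs ! ((i + (j + n - i)) mod n)" using nxt_pow d ij n_def by simp
    also have "i + (j + n - i) = j + n" using ij by simp
    finally show "\<exists>m. (nxt xs ^^ m) B = C" using ij by auto
  qed
  show ?thesis unfolding fL_def cyc_ord_partitions_def using okl_partition[OF ok] perm trans by auto
qed

lemma fL_inj: "inj_on fL (Lr r)"
proof (rule inj_onI)
  fix xs ys assume xs: "xs \<in> Lr r" and ys: "ys \<in> Lr r" and eq: "fL xs = fL ys"
  have okx: "okl xs {1..r}" and okY: "okl ys {1..r}" and ne: "xs \<noteq> []" "ys \<noteq> []"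
    and h1: "1 \<in> hd xs" "1 \<in> hd ys" using xs ys by (auto simp: Lr_def)
  have dx: "distinct xs" and dy: "distinct ys" using okl_props[OF okx] okl_props[OF okY] by auto
  have s: "set xs = set ys" and nx: "nxt xs = nxt ys" using eq by (auto simp: fL_def)
  have len: "length xs = length ys" using distinct_card[OF dx] distinct_card[OF dy] s by simp
  have disj: "\<forall>B\<in>set ys. \<forall>C\<in>set ys. B \<noteq> C \<longrightarrow> B \<inter> C = {}" using okl_props[OF okY] by simp
  have "hd xs \<in> set ys" using s ne by (metis hd_in_set)
  moreover have "hd ys \<in> set ys" using ne by simp
  ultimately have hd: "hd xs = hd ys" using disj h1 by blast
  have "\<forall>i. i < length xs \<longrightarrow> xs ! i = ys ! i"
  proof (intro allI)
    fix i show "i < length xs \<longrightarrow> xs ! i = ys ! i"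
    proof (induction i)
      case 0 then show ?case using hd ne by (simp add: hd_conv_nth)
    next
      case (Suc i)
      show ?case
      proof
        assume a: "Suc i < length xs"
        have "xs ! Suc i = nxt xs (xs ! i)" using nxt_nth[OF dx, of i] a by simp
        also have "\<dots> = nxt ys (ys ! i)" using Suc a nx by simp
        also have "\<dots> = ys ! Suc i" using nxt_nth[OF dy, of i] a len by simp
        finally show "xs ! Suc i = ys ! Suc i" .
      qed
    qed
  qed
  then show "xs = ys" using len by (simp add: nth_equalityI)
qed

lemma pow_cancel:
  assumes "inj s" "k \<le> m" "(s ^^ m) x = (s ^^ k) y" shows "(s ^^ (m - k)) x = y"
proof -
  have "(s ^^ m) x = (s ^^ k) ((s ^^ (m - k)) x)" using assms(2)
    by (metis funpow_add le_add_diff_inverse comp_apply)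
  then show ?thesis using assms inj_fn[of s k] by (metis injD)
qed

lemma fL_surj: assumes "r \<ge> 1" shows "cyc_ord_partitions r \<subseteq> fL ` Lr r"
proof
  fix Ps assume "Ps \<in> cyc_ord_partitions r"
  then obtain P s where Ps: "Ps = (P, s)" and part: "partition_on {1..r} P" and perm: "s permutes P"
    and tr: "\<forall>B\<in>P. \<forall>C\<in>P. \<exists>n. (s ^^ n) B = C"
    unfolding cyc_ord_partitions_def by auto
  have "1 \<in> \<Union>P" using part assms unfolding partition_on_def by auto
  then obtain B0 where B0: "B0 \<in> P" "1 \<in> B0" by auto
  have finP: "finite P" using part unfolding partition_on_def by (metis finite_UnionD finite_atLeastAtMost)
  define n where "n = card P"
  have n0: "n > 0" using finP B0 n_def card_gt_0_iff by blast
  have injs: "inj s" using perm by (rule permutes_inj)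
  have inP: "\<And>k. (s ^^ k) B0 \<in> P"
  proof -
    fix k show "(s ^^ k) B0 \<in> P"
      by (induction k) (auto simp: B0 permutes_in_image[OF perm])
  qed
  define f where "f = (\<lambda>i. (s ^^ i) B0)"
  have orb: "\<forall>C\<in>P. \<exists>m. f m = C" using tr B0 f_def by auto
  have injf: "inj_on f {0..<n}"
  proof (rule ccontr)
    assume "\<not> inj_on f {0..<n}"
    then obtain i j where ij: "i < j" "j < n" "f i = f j"
      unfolding inj_on_def by (metis atLeastLessThan_iff linorder_neqE_nat)
    define d where "d = j - i"
    have d0: "d > 0" using ij d_def by simp
    have per: "(s ^^ d) B0 = B0" using pow_cancel[OF injs, of i j B0 B0] ij d_def f_def by simp
    have per2: "\<And>q. (s ^^ (q * d)) B0 = B0"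
    proof -
      fix q show "(s ^^ (q * d)) B0 = B0"
        by (induction q) (simp_all add: funpow_add per)
    qed
    have "\<And>m. f m = f (m mod d)"
    proof -
      fix m
      have "f m = (s ^^ (m mod d)) ((s ^^ ((m div d) * d)) B0)"
        unfolding f_def by (metis funpow_add comp_apply add.commute div_mult_mod_eq)
      then show "f m = f (m mod d)" using per2 f_def by simp
    qed
    then have "P \<subseteq> f ` {..<d}" using orb d0 by (metis image_eqI lessThan_iff mod_less_divisor subsetI)
    then have "card P \<le> d" by (metis card_image_le card_lessThan finite_lessThan le_trans card_mono finite_imageI)
    then show False using ij d_def n_def by simp
  qed
  define xs where "xs = map f [0..<n]"
  have dx: "distinct xs" using injf xs_def by (simp add: distinct_map)
  have sx: "set xs = P"
  proof -
    have "set xs \<subseteq> P" using inP xs_def f_def by auto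
    moreover have "card (set xs) = card P" using dx xs_def n_def distinct_card by fastforce
    ultimately show ?thesis using finP card_subset_eq by blast
  qed
  have lx: "length xs = n" using xs_def by simp
  have ok: "okl xs {1..r}" using okl_of[OF dx] part sx by simp
  have hd: "1 \<in> hd xs" using n0 xs_def f_def B0 by (simp add: hd_map)
  have fn: "f n = B0"
  proof -
    have "f n \<in> set xs" using sx inP f_def by simp
    then obtain k where k: "k < n" "f n = f k" using xs_def by auto
    show ?thesis
    proof (cases "k = 0")
      case True then show ?thesis using k f_def by simp
    next
      case False
      have "(s ^^ (n - k)) B0 = B0" using pow_cancel[OF injs, of k n B0 B0] k f_def by simp
      then have "f (n - k) = f 0" using f_def by simp
      moreover have "n - k \<in> {0..<n}" "0 \<in> {0..<n}" using False k by auto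
      ultimately have "n - k = 0" using injf by (meson inj_onD)
      then show ?thesis using k by simp
    qed
  qed
  have nx: "nxt xs = s"
  proof
    fix B show "nxt xs B = s B"
    proof (cases "B \<in> P")
      case False then show ?thesis using sx nxt_out permutes_not_in[OF perm] by simp
    next
      case True
      then obtain i where i: "i < n" "B = xs ! i" using sx lx by (auto simp: in_set_conv_nth)
      have B: "B = f i" using i xs_def by simp
      have "nxt xs B = xs ! (Suc i mod n)" using nxt_nth[OF dx] i lx by simp
      also have "\<dots> = f (Suc i)"
      proof (cases "Suc i < n")
        case True then show ?thesis using xs_def by simp
      next
        case False then have "Suc i = n" using i by simp
        then show ?thesis using xs_def fn n0 f_def by simp
      qed
      also have "\<dots> = s B" using B f_def by simp
      finally show ?thesis .
    qed
  qed
  have "xs \<in> Lr r" using ok hd n0 lx by (auto simp: Lr_def)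
  moreover have "Ps = fL xs" using Ps sx nx by (simp add: fL_def)
  ultimately show "Ps \<in> fL ` Lr r" by blast
qed

lemma psi_split:
  assumes part: "partition_on A Q" and fin: "finite A" and JQ: "J \<in> Q" and e: "\<psi> {} = 1"
  shows "psiQ \<psi> Q X = psiQ \<psi> Q (X \<inter> J) * psiQ \<psi> Q (X - J)"
proof -
  have finQ: "finite Q" using part fin unfolding partition_on_def by (metis finite_UnionD)
  have dis: "\<And>J'. J' \<in> Q - {J} \<Longrightarrow> J \<inter> J' = {}"
    using part JQ unfolding partition_on_def disjoint_def pairwise_def disjnt_def by blast
  have r: "\<And>Y. psiQ \<psi> Q Y = \<psi> (Y \<inter> J) * (\<Prod>J'\<in>Q - {J}. \<psi> (Y \<inter> J'))"
    unfolding psiQ_def using prod.remove[OF finQ JQ] by simp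
  have a: "(\<Prod>J'\<in>Q - {J}. \<psi> (X \<inter> J \<inter> J')) = 1"
  proof (rule prod.neutral, intro ballI)
    fix J' assume "J' \<in> Q - {J}"
    then have "X \<inter> J \<inter> J' = {}" using dis by blast
    then show "\<psi> (X \<inter> J \<inter> J') = 1" using e by simp
  qed
  have b: "(\<Prod>J'\<in>Q - {J}. \<psi> ((X - J) \<inter> J')) = (\<Prod>J'\<in>Q - {J}. \<psi> (X \<inter> J'))"
  proof (rule prod.cong[OF refl])
    fix J' assume "J' \<in> Q - {J}"
    then have "(X - J) \<inter> J' = X \<inter> J'" using dis by blast
    then show "\<psi> ((X - J) \<inter> J') = \<psi> (X \<inter> J')" by simp
  qed
  have c: "X \<inter> J \<inter> J = X \<inter> J" "(X - J) \<inter> J = {}" by auto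
  show ?thesis unfolding r[of X] r[of "X \<inter> J"] r[of "X - J"] a b c e by simp
qed

theorem lemma8p2:
  fixes r :: nat and Q :: "nat set set"
  assumes "r \<ge> 3"
    and "partition_on {1..r} Q"
    and "card Q \<ge> 2"
  shows "\<exists>\<tau>. bij_betw \<tau> (cyc_ord_partitions r) (cyc_ord_partitions r) \<and>
           (\<forall>P\<in>cyc_ord_partitions r. nblocks (\<tau> P) mod 2 = (nblocks P + 1) mod 2) \<and>
           (\<forall>\<psi> :: nat set \<Rightarrow> real. \<psi> {} = 1 \<longrightarrow>
              (\<forall>P\<in>cyc_ord_partitions r. psiQ_tilde \<psi> Q (\<tau> P) = psiQ_tilde \<psi> Q P))"
proof -
  have r1: "r \<ge> 1" using assms(1) by simp
  have "1 \<in> \<Union>Q" using assms(2) r1 unfolding partition_on_def by auto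
  then obtain J where JQ: "J \<in> Q" and J1: "1 \<in> J" by auto
  have finQ: "finite Q" using assms(2) unfolding partition_on_def by (metis finite_UnionD finite_atLeastAtMost)
  obtain J' where J': "J' \<in> Q" "J' \<noteq> J"
  proof -
    have "\<not> Q \<subseteq> {J}"
    proof
      assume "Q \<subseteq> {J}"
      then have "card Q \<le> card {J}" by (intro card_mono) auto
      then show False using assms(3) by simp
    qed
    then show ?thesis using that by blast
  qed
  have "J' \<noteq> {}" "J' \<subseteq> {1..r}" "J \<inter> J' = {}" using assms(2) J' JQ
    unfolding partition_on_def disjoint_def pairwise_def disjnt_def by blast+
  then have notsub: "\<not> {1..r} \<subseteq> J" by blast
  define g where "g = gI J"
  have gL: "\<And>xs. xs \<in> Lr r \<Longrightarrow> g xs \<in> Lr r"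
    unfolding Lr_def g_def using okl_g g_nonempty hd_g J1 by blast
  have gg: "\<And>xs. xs \<in> Lr r \<Longrightarrow> g (g xs) = xs"
    unfolding Lr_def g_def using invol by blast
  have bg: "bij_betw g (Lr r) (Lr r)"
    by (rule bij_betw_byWitness[where f'=g]) (use gL gg in auto)
  have bf: "bij_betw fL (Lr r) (cyc_ord_partitions r)"
    unfolding bij_betw_def using fL_inj fL_in fL_surj[OF r1] by blast
  define \<tau> where "\<tau> = fL \<circ> (g \<circ> inv_into (Lr r) fL)"
  have bt: "bij_betw \<tau> (cyc_ord_partitions r) (cyc_ord_partitions r)"
    unfolding \<tau>_def using bij_betw_trans[OF bij_betw_trans[OF bij_betw_inv_into[OF bf] bg] bf] .
  have key: "\<And>P. P \<in> cyc_ord_partitions r \<Longrightarrow> \<exists>xs\<in>Lr r. P = fL xs \<and> \<tau> P = fL (g xs)"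
  proof -
    fix P assume P: "P \<in> cyc_ord_partitions r"
    define xs where "xs = inv_into (Lr r) fL P"
    have "xs \<in> Lr r" using P bf xs_def by (metis bij_betw_def inv_into_into)
    moreover have "P = fL xs" using P bf xs_def by (metis bij_betw_def f_inv_into_f)
    ultimately show "\<exists>xs\<in>Lr r. P = fL xs \<and> \<tau> P = fL (g xs)" unfolding \<tau>_def xs_def by auto
  qed
  have dist: "\<And>xs. xs \<in> Lr r \<Longrightarrow> distinct xs" unfolding Lr_def using okl_props by blast
  have nb: "\<And>xs. xs \<in> Lr r \<Longrightarrow> nblocks (fL xs) = length xs"
    unfolding nblocks_def fL_def by (simp add: dist distinct_card)
  have pt: "\<And>xs \<psi>. xs \<in> Lr r \<Longrightarrow> psiQ_tilde \<psi> Q (fL xs) = prod_list (map (psiQ \<psi> Q) xs)"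
    unfolding psiQ_tilde_def fL_def by (simp add: dist prod.distinct_set_conv_list)
  have par: "\<forall>P\<in>cyc_ord_partitions r. nblocks (\<tau> P) mod 2 = (nblocks P + 1) mod 2"
  proof
    fix P assume "P \<in> cyc_ord_partitions r"
    then obtain xs where xs: "xs \<in> Lr r" "P = fL xs" "\<tau> P = fL (g xs)" using key by blast
    have ok: "okl xs {1..r}" "xs \<noteq> []" "1 \<in> hd xs" using xs unfolding Lr_def by auto
    have "hd xs \<inter> J \<noteq> {}" using ok J1 by blast
    then have "length (g xs) = Suc (length xs) \<or> Suc (length (g xs)) = length xs"
      unfolding g_def using len_g ok notsub by blast
    moreover have "nblocks (\<tau> P) = length (g xs)" "nblocks P = length xs"
      using xs nb gL by auto
    ultimately show "nblocks (\<tau> P) mod 2 = (nblocks P + 1) mod 2"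
      by (elim disjE) presburger+
  qed
  have ps: "\<forall>\<psi> :: nat set \<Rightarrow> real. \<psi> {} = 1 \<longrightarrow>
              (\<forall>P\<in>cyc_ord_partitions r. psiQ_tilde \<psi> Q (\<tau> P) = psiQ_tilde \<psi> Q P)"
  proof (intro allI impI ballI)
    fix \<psi> :: "nat set \<Rightarrow> real" and P
    assume e: "\<psi> {} = 1" and "P \<in> cyc_ord_partitions r"
    then obtain xs where xs: "xs \<in> Lr r" "P = fL xs" "\<tau> P = fL (g xs)" using key by blast
    have ok: "okl xs {1..r}" using xs unfolding Lr_def by auto
    have sp: "\<And>X. psiQ \<psi> Q X = psiQ \<psi> Q (X \<inter> J) * psiQ \<psi> Q (X - J)"
      by (rule psi_split[of "{1..r}" Q J \<psi>]) (use assms(2) JQ e in auto)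
    have "prod_list (map (psiQ \<psi> Q) (g xs)) = prod_list (map (psiQ \<psi> Q) xs)"
      unfolding g_def by (rule prod_g[OF sp ok])
    then show "psiQ_tilde \<psi> Q (\<tau> P) = psiQ_tilde \<psi> Q P"
      using xs pt gL by simp
  qed
  show ?thesis using bt par ps by blast
qed

end
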